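(* Let $N, M \ge 1$ be integers, let the sites be indexed by $j \in \mathbb{Z}_M$ (indices taken cyclically, so site $M+1$ is site $1$), and let $\lambda \ge 0$. Let real numbers $d_{i j l}$, for $i \in \{1,\dots,N\}$ and $j,l \in \mathbb{Z}_M$, satisfy the additive property $d_{ijl} + d_{ilk} = d_{ijk}$ for all $i$ and all $j,l,k \in \mathbb{Z}_M$. Potts model: for a configuration $s = (s_1,\dots,s_M) \in \{1,\dots,N\}^{M}$ define $$H_s(s) = -\sum_{j \in \mathbb{Z}_M} d_{s_j\, j\, (j+1)} + \lambda\, \#\{ j \in \mathbb{Z}_M : s_j \neq s_{j+1}\}.$$ Ising (domain-wall) model: for a configuration $c = (c_1,\dots,c_M) \in \{0,1\}^M$, let $p_1 < p_2 < \dots < p_K$ be the sites with $c_{p}=1$, and define $$H_c(c) = -\sum_{k=1}^{K} J_{p_k\, p_{k+1}} + \lambda \sum_{j} c_j, \qquad p_{K+1} := p_1,$$ where $J_{jl} = \max_{i} d_{ijl}$ (the sum over $k$ is empty, hence $0$, when $K=0$). Then the ground state energies coincide: $\min_{s \in \{1,\dots,N\}^M} H_s(s) = \min_{c \in \{0,1\}^M} H_c(c)$.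
   Context: Interpretation (not needed for the statement): sites $j$ are sampled body shapes traversed cyclically in one gait cycle, the Potts spin value $s_j$ is the contact pattern used on the step from shape $j$ to shape $j+1$, $d_{ijl}$ is the forward displacement obtained by moving from shape $j$ to shape $l$ with contact pattern $i$, and $\lambda$ is a penalty per contact switch. A domain wall $c_{j+1}=1$ corresponds to $s_j \neq s_{j+1}$, and the coupling $J_{jl}$ acts only between cyclically consecutive domain walls. *)

theory Defs
  imports Complex_Main
begin

text \<open>Sites of Z_M are represented by 0..M-1, successor of j is (j+1) mod M.
Spin values are 1..N. Configurations are lists of length M.\<close>

definition potts_configs :: "nat \<Rightarrow> nat \<Rightarrow> nat list set" where
  "potts_configs N M = {s. length s = M \<and> set s \<subseteq> {1..N}}"

definition ising_configs :: "nat \<Rightarrow> bool list set" where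
  "ising_configs M = {c. length c = M}"

definition H_potts :: "nat \<Rightarrow> (nat \<Rightarrow> nat \<Rightarrow> nat \<Rightarrow> real) \<Rightarrow> real \<Rightarrow> nat list \<Rightarrow> real" where
  "H_potts M d lam s =
     - (\<Sum>j<M. d (s ! j) j ((j + 1) mod M))
     + lam * real (card {j. j < M \<and> s ! j \<noteq> s ! ((j + 1) mod M)})"

definition J_coup :: "nat \<Rightarrow> (nat \<Rightarrow> nat \<Rightarrow> nat \<Rightarrow> real) \<Rightarrow> nat \<Rightarrow> nat \<Rightarrow> real" where
  "J_coup N d j l = (MAX i\<in>{1..N}. d i j l)"

definition walls :: "nat \<Rightarrow> bool list \<Rightarrow> nat list" where
  "walls M c = sorted_list_of_set {j. j < M \<and> c ! j}"

definition H_ising :: "nat \<Rightarrow> nat \<Rightarrow> (nat \<Rightarrow> nat \<Rightarrow> nat \<Rightarrow> real) \<Rightarrow> real \<Rightarrow> bool list \<Rightarrow> real" where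
  "H_ising N M d lam c =
     (let p = walls M c; K = length p in
      - (\<Sum>k<K. J_coup N d (p ! k) (p ! ((k + 1) mod K)))
      + lam * real (card {j. j < M \<and> c ! j}))"

end

theory Submission
  imports Defs
begin



lemma shift_sum:
  fixes g :: "nat \<Rightarrow> 'a::comm_monoid_add"
  assumes "M \<ge> 1"
  shows "(\<Sum>j<M. g ((j+1) mod M)) = (\<Sum>j<M. g j)"
proof -
  obtain n where M: "M = Suc n" using assms by (cases M) auto
  have "(\<Sum>j<n. g ((j+1) mod M)) = (\<Sum>j<n. g (Suc j))"
    by (rule sum.cong) (auto simp: M)
  moreover have "(\<Sum>j<M. g ((j+1) mod M)) = (\<Sum>j<n. g ((j+1) mod M)) + g 0"
    by (simp add: M)
  moreover have "(\<Sum>j<M. g j) = g 0 + (\<Sum>j<n. g (Suc j))"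
    unfolding M by (rule sum.lessThan_Suc_shift)
  ultimately show ?thesis by (simp only: add.commute)
qed

lemma pred_succ: "(j::nat) < M \<Longrightarrow> ((j+1) mod M + M - 1) mod M = j"
proof (cases "j+1 < M")
  case True
  then have "(j+1) mod M + M - 1 = j + M" by simp
  then show ?thesis using True by simp
next
  case False
  assume "j < M"
  then have M: "M = j + 1" using False by simp
  have "(j+1) mod M = 0" unfolding M by simp
  then show ?thesis unfolding M by simp
qed

lemma succ_pred: "(j::nat) < M \<Longrightarrow> ((j + M - 1) mod M + 1) mod M = j"
proof (cases "j = 0")
  case True
  assume "j < M"
  then obtain n where M: "M = Suc n" by (cases M) auto
  have "(j + M - 1) mod M = n" using True M by simp
  then show ?thesis using True M by simp
next
  case False
  assume "j < M"
  then have e: "j + M - 1 = (j - 1) + M" using False by simp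
  have "((j - 1) + M) mod M = j - 1" using \<open>j < M\<close> by simp
  then have "(j + M - 1) mod M = j - 1" by (simp only: e)
  then show ?thesis using False \<open>j < M\<close> by simp
qed

lemma pred_lt: "(M::nat) \<ge> 1 \<Longrightarrow> (j + M - 1) mod M < M" by simp



definition segf :: "nat set \<Rightarrow> nat \<Rightarrow> nat" where
  "segf W j = (card {w\<in>W. w \<le> j} + card W - 1) mod card W"

lemma sl_less_iff:
  assumes "finite W" "i < card W" "k < card W"
  shows "(sorted_list_of_set W ! i \<le> sorted_list_of_set W ! k) = (i \<le> k)"
proof -
  let ?p = "sorted_list_of_set W"
  have s: "sorted_wrt (<) ?p" by simp
  have l: "length ?p = card W" by simp
  show ?thesis
  proof
    assume "?p ! i \<le> ?p ! k"
    then show "i \<le> k" using sorted_wrt_nth_less[OF s, of k i] assms l by (metis leD linorder_le_less_linear)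
  next
    assume "i \<le> k"
    then show "?p ! i \<le> ?p ! k" using sorted_wrt_nth_less[OF s, of i k] assms l
      by (metis dual_order.order_iff_strict less_imp_le)
  qed
qed

lemma card_upto_nth:
  assumes "finite W" "k < card W"
  shows "card {w\<in>W. w \<le> sorted_list_of_set W ! k} = Suc k"
proof -
  let ?p = "sorted_list_of_set W"
  have l: "length ?p = card W" by simp
  have d: "distinct ?p" by simp
  have "{w\<in>W. w \<le> ?p ! k} = (\<lambda>i. ?p ! i) ` {..k}"
  proof
    show "{w\<in>W. w \<le> ?p ! k} \<subseteq> (\<lambda>i. ?p ! i) ` {..k}"
    proof
      fix w assume "w \<in> {w\<in>W. w \<le> ?p ! k}"
      then have w: "w \<in> set ?p" "w \<le> ?p ! k" using assms by auto
      then obtain i where i: "i < length ?p" "w = ?p ! i" by (auto simp: in_set_conv_nth)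
      then have "i \<le> k" using sl_less_iff[OF assms(1), of i k] w l assms by simp
      then show "w \<in> (\<lambda>i. ?p ! i) ` {..k}" using i by auto
    qed
  next
    show "(\<lambda>i. ?p ! i) ` {..k} \<subseteq> {w\<in>W. w \<le> ?p ! k}"
    proof
      fix w assume "w \<in> (\<lambda>i. ?p ! i) ` {..k}"
      then obtain i where i: "i \<le> k" "w = ?p ! i" by auto
      have "i < length ?p" using i assms l by simp
      then have "?p ! i \<in> set ?p" by (rule nth_mem)
      then have "w \<in> W" using i assms(1) by simp
      moreover have "w \<le> ?p ! k" using i sl_less_iff[OF assms(1), of i k] assms by simp
      ultimately show "w \<in> {w\<in>W. w \<le> ?p ! k}" by simp
    qed
  qed
  moreover have "inj_on (\<lambda>i. ?p ! i) {..k}"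
    using d l assms by (auto simp: inj_on_def nth_eq_iff_index_eq)
  ultimately show ?thesis by (simp add: card_image)
qed

lemma segf_lt: "W \<noteq> {} \<Longrightarrow> finite W \<Longrightarrow> segf W j < card W"
  unfolding segf_def by (simp add: card_gt_0_iff)

lemma mod_aux: "(K::nat) \<ge> 1 \<Longrightarrow> (K + K - 1) mod K = K - 1"
proof -
  assume K: "K \<ge> 1"
  have e: "K + K - 1 = (K - 1) + K" using K by simp
  have "((K - 1) + K) mod K = (K - 1) mod K" by (rule mod_add_self2)
  also have "\<dots> = K - 1" using K by simp
  finally show ?thesis by (simp only: e)
qed

lemma segf_S1:
  assumes W: "W \<subseteq> {..<M}" "W \<noteq> {}" and j: "j < M" "j \<notin> W"
  shows "segf W ((j + M - 1) mod M) = segf W j"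
proof -
  have fin: "finite W" using W finite_subset by blast
  have K: "card W \<ge> 1" using fin W by (simp add: Suc_le_eq card_gt_0_iff)
  show ?thesis
  proof (cases "j = 0")
    case True
    have M: "M \<ge> 1" using j by simp
    have e1: "(j + M - 1) mod M = M - 1" using True M by simp
    have "{w\<in>W. w \<le> M - 1} = W" using W by auto
    then have a: "segf W ((j + M - 1) mod M) = card W - 1"
      unfolding segf_def e1 using mod_aux[OF K] by simp
    have "{w\<in>W. w \<le> j} = {}" using True j by auto
    then have c0: "card {w\<in>W. w \<le> j} = 0" by (simp only: card.empty)
    have b: "segf W j = card W - 1" unfolding segf_def c0 using K by simp
    show ?thesis using a b by simp
  next
    case False
    have e: "j + M - 1 = (j - 1) + M" using False by simp
    have "((j - 1) + M) mod M = j - 1" using j by simp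
    then have e1: "(j + M - 1) mod M = j - 1" by (simp only: e)
    have xx: "(x \<le> j - 1) = (x \<le> j)" if "x \<in> W" for x
      using that False j(2) by (cases "x = j") auto
    have "{w\<in>W. w \<le> j - 1} = {w\<in>W. w \<le> j}" using xx by blast
    then show ?thesis unfolding segf_def e1 by simp
  qed
qed

lemma segf_S2:
  assumes "finite W" "k < card W"
  shows "segf W (sorted_list_of_set W ! k) = k"
  unfolding segf_def using card_upto_nth[OF assms] assms by simp

lemma segf_S3:
  assumes W: "W \<subseteq> {..<M}" "W \<noteq> {}" and k: "k < card W"
  shows "segf W ((sorted_list_of_set W ! k + M - 1) mod M) = (k + card W - 1) mod card W"
proof -
  let ?p = "sorted_list_of_set W"
  have fin: "finite W" using W finite_subset by blast
  have K: "card W \<ge> 1" using fin W by (simp add: Suc_le_eq card_gt_0_iff)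
  have pin: "?p ! k \<in> W" using fin k by (metis length_sorted_list_of_set nth_mem set_sorted_list_of_set)
  then have pM: "?p ! k < M" using W by auto
  show ?thesis
  proof (cases "?p ! k = 0")
    case True
    have k0: "k = 0"
    proof (rule ccontr)
      assume "k \<noteq> 0"
      then have "?p ! 0 < ?p ! k" using sorted_wrt_nth_less[of "(<)" ?p 0 k] k fin by simp
      then show False using True by simp
    qed
    have M: "M \<ge> 1" using pM by simp
    have e1: "(?p ! k + M - 1) mod M = M - 1" using True M by simp
    have "{w\<in>W. w \<le> M - 1} = W" using W by auto
    then have "segf W ((?p ! k + M - 1) mod M) = card W - 1"
      unfolding segf_def e1 using mod_aux[OF K] by simp
    then show ?thesis using k0 K by simp
  next
    case False
    have e: "?p ! k + M - 1 = (?p ! k - 1) + M" using False by simp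
    have "((?p ! k - 1) + M) mod M = ?p ! k - 1" using pM by simp
    then have e1: "(?p ! k + M - 1) mod M = ?p ! k - 1" by (simp only: e)
    have "{w\<in>W. w \<le> ?p ! k - 1} = {w\<in>W. w \<le> ?p ! k} - {?p ! k}" using False by auto
    then have "card {w\<in>W. w \<le> ?p ! k - 1} = k"
      using card_upto_nth[OF fin k] pin fin by simp
    then show ?thesis unfolding segf_def e1 by simp
  qed
qed




lemma phi_rep:
  fixes d :: "nat \<Rightarrow> nat \<Rightarrow> nat \<Rightarrow> real"
  assumes add: "\<And>i j l k. i \<in> {1..N} \<Longrightarrow> j < M \<Longrightarrow> l < M \<Longrightarrow> k < M \<Longrightarrow>
                     d i j l + d i l k = d i j k"
    and "a \<in> {1..N}" "j < M" "l < M"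
  shows "d a j l = d a 0 l - d a 0 j"
proof -
  have "d a 0 j + d a j l = d a 0 l" using add[of a 0 j l] assms by simp
  then show ?thesis by simp
qed

lemma potts_sum:
  fixes d :: "nat \<Rightarrow> nat \<Rightarrow> nat \<Rightarrow> real" and s i :: "nat \<Rightarrow> nat"
  assumes M: "M \<ge> 1"
    and add: "\<And>i j l k. i \<in> {1..N} \<Longrightarrow> j < M \<Longrightarrow> l < M \<Longrightarrow> k < M \<Longrightarrow>
                     d i j l + d i l k = d i j k"
    and W: "W \<subseteq> {..<M}" "W \<noteq> {}"
    and sN: "\<And>j. j < M \<Longrightarrow> s j \<in> {1..N}"
    and iN: "\<And>k. k < card W \<Longrightarrow> i k \<in> {1..N}"
    and h1: "\<And>j. j < M \<Longrightarrow> j \<notin> W \<Longrightarrow> s ((j + M - 1) mod M) = s j"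
    and h2: "\<And>k. k < card W \<Longrightarrow> s (sorted_list_of_set W ! k) = i k"
    and h3: "\<And>k. k < card W \<Longrightarrow>
               s ((sorted_list_of_set W ! k + M - 1) mod M) = i ((k + card W - 1) mod card W)"
  shows "(\<Sum>j<M. d (s j) j ((j+1) mod M)) =
         (\<Sum>k<card W. d (i k) (sorted_list_of_set W ! k)
                           (sorted_list_of_set W ! ((k+1) mod card W)))"
proof -
  define phi where "phi a j = d a 0 j" for a j
  define K where "K = card W"
  define p where "p = sorted_list_of_set W"
  have fin: "finite W" using W finite_subset by blast
  have K1: "K \<ge> 1" using fin W unfolding K_def by (simp add: Suc_le_eq card_gt_0_iff)
  have lp: "length p = K" unfolding p_def K_def by simp
  have dp: "distinct p" unfolding p_def by simp
  have sp: "set p = W" unfolding p_def using fin by simp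
  have pM: "p ! k < M" if "k < K" for k
    using that lp sp W nth_mem by (metis lessThan_iff subsetD)
  have "(\<Sum>j<M. d (s j) j ((j+1) mod M)) = (\<Sum>j<M. phi (s j) ((j+1) mod M) - phi (s j) j)"
    by (rule sum.cong) (auto simp: phi_def intro!: phi_rep[where N=N and M=M] sN M intro: add)
  also have "\<dots> = (\<Sum>j<M. phi (s j) ((j+1) mod M)) - (\<Sum>j<M. phi (s j) j)"
    by (rule sum_subtractf)
  also have "(\<Sum>j<M. phi (s j) ((j+1) mod M)) = (\<Sum>j<M. phi (s ((j + M - 1) mod M)) j)"
  proof -
    have "(\<Sum>j<M. phi (s j) ((j+1) mod M)) =
          (\<Sum>j<M. phi (s (((j+1) mod M + M - 1) mod M)) ((j+1) mod M))"
      by (rule sum.cong) (auto simp: pred_succ[simplified])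
    also have "\<dots> = (\<Sum>j<M. phi (s ((j + M - 1) mod M)) j)"
      by (rule shift_sum[OF M, of "\<lambda>j. phi (s ((j + M - 1) mod M)) j"])
    finally show ?thesis .
  qed
  also have "(\<Sum>j<M. phi (s ((j + M - 1) mod M)) j) - (\<Sum>j<M. phi (s j) j)
      = (\<Sum>j<M. phi (s ((j + M - 1) mod M)) j - phi (s j) j)"
    by (rule sum_subtractf[symmetric])
  also have "\<dots> = (\<Sum>j\<in>W. phi (s ((j + M - 1) mod M)) j - phi (s j) j)"
    by (rule sum.mono_neutral_right) (use W h1 in auto)
  also have "\<dots> = (\<Sum>k<K. phi (s ((p ! k + M - 1) mod M)) (p ! k) - phi (s (p ! k)) (p ! k))"
    using sum.reindex_bij_betw[OF bij_betw_nth[OF dp, of "{..<K}" W],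
        of "\<lambda>j. phi (s ((j + M - 1) mod M)) j - phi (s j) j"] lp sp by simp
  also have "\<dots> = (\<Sum>k<K. phi (i ((k + K - 1) mod K)) (p ! k) - phi (i k) (p ! k))"
    by (rule sum.cong) (auto simp: h2 h3[simplified] K_def p_def)
  also have "\<dots> = (\<Sum>k<K. phi (i ((k + K - 1) mod K)) (p ! k)) - (\<Sum>k<K. phi (i k) (p ! k))"
    by (rule sum_subtractf)
  also have "(\<Sum>k<K. phi (i ((k + K - 1) mod K)) (p ! k)) = (\<Sum>k<K. phi (i k) (p ! ((k+1) mod K)))"
  proof -
    have "(\<Sum>k<K. phi (i ((k + K - 1) mod K)) (p ! k)) =
          (\<Sum>k<K. phi (i (((k+1) mod K + K - 1) mod K)) (p ! ((k+1) mod K)))"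
      by (rule shift_sum[OF K1, of "\<lambda>k. phi (i ((k + K - 1) mod K)) (p ! k)", symmetric])
    also have "\<dots> = (\<Sum>k<K. phi (i k) (p ! ((k+1) mod K)))"
      by (rule sum.cong) (auto simp: pred_succ[simplified])
    finally show ?thesis .
  qed
  also have "(\<Sum>k<K. phi (i k) (p ! ((k+1) mod K))) - (\<Sum>k<K. phi (i k) (p ! k))
      = (\<Sum>k<K. phi (i k) (p ! ((k+1) mod K)) - phi (i k) (p ! k))"
    by (rule sum_subtractf[symmetric])
  also have "\<dots> = (\<Sum>k<K. d (i k) (p ! k) (p ! ((k+1) mod K)))"
  proof (rule sum.cong)
    fix k assume k: "k \<in> {..<K}"
    have "(k+1) mod K < K" using K1 by simp
    then have "d (i k) (p ! k) (p ! ((k+1) mod K)) = d (i k) 0 (p ! ((k+1) mod K)) - d (i k) 0 (p ! k)"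
      using k pM iN[of k] unfolding K_def by (intro phi_rep[where N=N and M=M]) (auto intro: add)
    then show "phi (i k) (p ! ((k+1) mod K)) - phi (i k) (p ! k) = d (i k) (p ! k) (p ! ((k+1) mod K))"
      unfolding phi_def by simp
  qed simp
  finally show ?thesis unfolding K_def p_def .
qed

lemma const_sum:
  fixes d :: "nat \<Rightarrow> nat \<Rightarrow> nat \<Rightarrow> real"
  assumes M: "M \<ge> 1"
    and add: "\<And>i j l k. i \<in> {1..N} \<Longrightarrow> j < M \<Longrightarrow> l < M \<Longrightarrow> k < M \<Longrightarrow>
                     d i j l + d i l k = d i j k"
    and a: "a \<in> {1..N}"
  shows "(\<Sum>j<M. d a j ((j+1) mod M)) = 0"
proof -
  have "(\<Sum>j<M. d a j ((j+1) mod M)) = (\<Sum>j<M. d a 0 ((j+1) mod M) - d a 0 j)"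
    by (rule sum.cong) (auto intro!: phi_rep[where N=N and M=M] a M intro: add)
  also have "\<dots> = (\<Sum>j<M. d a 0 ((j+1) mod M)) - (\<Sum>j<M. d a 0 j)"
    by (rule sum_subtractf)
  also have "\<dots> = 0" using shift_sum[OF M, of "\<lambda>j. d a 0 j"] by simp
  finally show ?thesis .
qed




lemma J_ge:
  assumes "a \<in> {1..N}"
  shows "d a j l \<le> J_coup N d j l"
  unfolding J_coup_def using assms by (intro Max_ge) auto

lemma J_attained:
  assumes "N \<ge> 1"
  shows "\<exists>a. a \<in> {1..N} \<and> d a j l = J_coup N d j l"
proof -
  have "J_coup N d j l \<in> (\<lambda>i. d i j l) ` {1..N}"
    unfolding J_coup_def using assms by (intro Max_in) auto
  then show ?thesis by auto
qed

lemma dirA: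
  fixes N M :: nat and d :: "nat \<Rightarrow> nat \<Rightarrow> nat \<Rightarrow> real" and lam :: real
  assumes N1: "N \<ge> 1" and M1: "M \<ge> 1" and lam: "lam \<ge> 0"
    and add: "\<And>i j l k. i \<in> {1..N} \<Longrightarrow> j < M \<Longrightarrow> l < M \<Longrightarrow> k < M \<Longrightarrow>
                     d i j l + d i l k = d i j k"
    and sP: "s \<in> potts_configs N M"
  shows "\<exists>c\<in>ising_configs M. H_ising N M d lam c \<le> H_potts M d lam s"
proof -
  have ls: "length s = M" and ss: "set s \<subseteq> {1..N}" using sP by (auto simp: potts_configs_def)
  have sN: "s ! j \<in> {1..N}" if "j < M" for j using that ls ss nth_mem by blast
  define W where "W = {j. j < M \<and> s ! ((j + M - 1) mod M) \<noteq> s ! j}"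
  define c where "c = map (\<lambda>j. s ! ((j + M - 1) mod M) \<noteq> s ! j) [0..<M]"
  define PW where "PW = {j. j < M \<and> s ! j \<noteq> s ! ((j + 1) mod M)}"
  have cI: "c \<in> ising_configs M" by (simp add: c_def ising_configs_def)
  have cW: "{j. j < M \<and> c ! j} = W" by (auto simp: c_def W_def)
  have Wsub: "W \<subseteq> {..<M}" by (auto simp: W_def)
  have finW: "finite W" using Wsub finite_subset by blast
  have cardle: "card W \<le> card PW"
  proof (rule card_inj_on_le[of "\<lambda>j. (j + M - 1) mod M"])
    show "inj_on (\<lambda>j. (j + M - 1) mod M) W"
    proof (rule inj_onI)
      fix a b assume "a \<in> W" "b \<in> W" "(a + M - 1) mod M = (b + M - 1) mod M"
      then show "a = b" using succ_pred[of a M] succ_pred[of b M] by (auto simp: W_def)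
    qed
    show "(\<lambda>j. (j + M - 1) mod M) ` W \<subseteq> PW"
    proof
      fix x assume "x \<in> (\<lambda>j. (j + M - 1) mod M) ` W"
      then obtain j where j: "j \<in> W" "x = (j + M - 1) mod M" by auto
      have "((j + M - 1) mod M + 1) mod M = j" using j by (intro succ_pred) (auto simp: W_def)
      then show "x \<in> PW" using j M1 by (auto simp: PW_def W_def)
    qed
    show "finite PW" by (simp add: PW_def)
  qed
  have HP: "H_potts M d lam s = - (\<Sum>j<M. d (s ! j) j ((j + 1) mod M)) + lam * real (card PW)"
    unfolding H_potts_def PW_def by simp
  have HI: "H_ising N M d lam c =
     - (\<Sum>k<card W. J_coup N d (sorted_list_of_set W ! k) (sorted_list_of_set W ! ((k + 1) mod card W)))
      + lam * real (card W)"
    unfolding H_ising_def walls_def cW Let_def using finW by simp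
  show ?thesis
  proof (cases "W = {}")
    case True
    have const: "s ! j = s ! 0" if "j < M" for j
      using that
    proof (induction j)
      case 0 then show ?case by simp
    next
      case (Suc j)
      have "Suc j \<notin> W" using True by simp
      then have h: "s ! ((Suc j + M - 1) mod M) = s ! Suc j" using Suc.prems by (auto simp: W_def)
      have e0: "Suc j + M - 1 = j + M" by simp
      have "(j + M) mod M = j" using Suc.prems by simp
      then have e: "(Suc j + M - 1) mod M = j" by (simp only: e0)
      have "s ! j = s ! 0" using Suc.IH Suc.prems by simp
      then show ?case using h unfolding e by simp
    qed
    have "(\<Sum>j<M. d (s ! j) j ((j + 1) mod M)) = (\<Sum>j<M. d (s ! 0) j ((j + 1) mod M))"
    proof (rule sum.cong)
      fix j assume "j \<in> {..<M}"
      then have "s ! j = s ! 0" by (intro const) simp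
      then show "d (s ! j) j ((j + 1) mod M) = d (s ! 0) j ((j + 1) mod M)" by (simp only:)
    qed simp
    also have "\<dots> = 0" using M1 sN[of 0] by (intro const_sum[where N=N and M=M]) (auto intro: add)
    finally have "H_potts M d lam s = lam * real (card PW)" using HP by simp
    moreover have "H_ising N M d lam c = 0" using HI True by simp
    ultimately have "H_ising N M d lam c \<le> H_potts M d lam s" using lam by simp
    then show ?thesis using cI by blast
  next
    case False
    define p where "p = sorted_list_of_set W"
    define K where "K = card W"
    have K1: "K \<ge> 1" using finW False unfolding K_def by (simp add: Suc_le_eq card_gt_0_iff)
    have lp: "length p = K" unfolding p_def K_def by simp
    have sp: "set p = W" unfolding p_def using finW by simp
    have pW: "p ! k \<in> W" if "k < K" for k using that lp sp nth_mem by blast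
    define m where "m = p ! (K - 1)"
    have mW: "m \<in> W" unfolding m_def using K1 pW by simp
    then have mM: "m < M" using Wsub by auto
    have step: "s ! ((m + t) mod M) = s ! (p ! (segf W ((m + t) mod M)))" if "t < M" for t
      using that
    proof (induction t)
      case 0
      have "segf W m = K - 1" unfolding m_def p_def K_def using K1 finW
        by (intro segf_S2) (auto simp: K_def)
      then show ?case using mM by (simp add: m_def)
    next
      case (Suc t)
      define j where "j = (m + Suc t) mod M"
      have jM: "j < M" unfolding j_def using M1 by simp
      show ?case
      proof (cases "j \<in> W")
        case True
        then obtain k where k: "k < K" "j = p ! k" using sp lp by (metis in_set_conv_nth)
        have "segf W j = k" using k finW unfolding p_def K_def by (simp add: segf_S2)
        then show ?thesis using k by (simp add: j_def)
      next
        case jn: False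
        define x where "x = (m + t) mod M"
        have xM: "x < M" unfolding x_def using M1 by simp
        have "(x + 1) mod M = j" unfolding x_def j_def by (simp add: mod_Suc_eq)
        then have pj: "(j + M - 1) mod M = x" using pred_succ[OF xM] by simp
        have "s ! j = s ! ((j + M - 1) mod M)" using jn jM by (auto simp: W_def)
        also have "\<dots> = s ! (p ! (segf W ((j + M - 1) mod M)))"
          using Suc pj x_def by simp
        also have "segf W ((j + M - 1) mod M) = segf W j"
          using segf_S1[OF Wsub False jM jn] .
        finally show ?thesis by (simp add: j_def)
      qed
    qed
    have constancy: "s ! j = s ! (p ! (segf W j))" if "j < M" for j
    proof -
      define t where "t = (j + M - m) mod M"
      have "(m + t) mod M = (m + (j + M - m)) mod M" unfolding t_def by (simp add: mod_add_right_eq)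
      also have "\<dots> = j" using mM that by simp
      finally have e: "(m + t) mod M = j" .
      have "t < M" unfolding t_def using M1 by simp
      from step[OF this] show ?thesis by (simp only: e)
    qed
    have sumeq: "(\<Sum>j<M. d (s ! j) j ((j + 1) mod M)) =
        (\<Sum>k<card W. d (s ! (p ! k)) (p ! k) (p ! ((k+1) mod card W)))"
      unfolding p_def
    proof (rule potts_sum[where N=N and M=M and W=W and s="\<lambda>j. s ! j"
             and i="\<lambda>k. s ! (sorted_list_of_set W ! k)"])
      show "M \<ge> 1" by (rule M1)
      show "\<And>i j l k. i \<in> {1..N} \<Longrightarrow> j < M \<Longrightarrow> l < M \<Longrightarrow> k < M \<Longrightarrow>
                     d i j l + d i l k = d i j k" by (rule add)
      show "W \<subseteq> {..<M}" by (rule Wsub)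
      show "W \<noteq> {}" by (rule False)
      show "\<And>j. j < M \<Longrightarrow> s ! j \<in> {1..N}" by (rule sN)
      show "\<And>k. k < card W \<Longrightarrow> s ! (sorted_list_of_set W ! k) \<in> {1..N}"
        using pW Wsub sN unfolding p_def K_def by blast
      show "\<And>j. j < M \<Longrightarrow> j \<notin> W \<Longrightarrow> s ! ((j + M - 1) mod M) = s ! j"
        by (auto simp: W_def)
      show "\<And>k. k < card W \<Longrightarrow> s ! (sorted_list_of_set W ! k) = s ! (sorted_list_of_set W ! k)"
        by simp
      show "s ! ((sorted_list_of_set W ! k + M - 1) mod M) =
            s ! (sorted_list_of_set W ! ((k + card W - 1) mod card W))" if k: "k < card W" for k
      proof -
        have "(sorted_list_of_set W ! k + M - 1) mod M < M" using M1 by simp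
        then have "s ! ((sorted_list_of_set W ! k + M - 1) mod M) =
            s ! (p ! segf W ((sorted_list_of_set W ! k + M - 1) mod M))" by (rule constancy)
        then show ?thesis using segf_S3[OF Wsub False k] unfolding p_def by simp
      qed
    qed
    have "(\<Sum>k<card W. d (s ! (p ! k)) (p ! k) (p ! ((k+1) mod card W))) \<le>
          (\<Sum>k<card W. J_coup N d (p ! k) (p ! ((k+1) mod card W)))"
      by (rule sum_mono, rule J_ge) (use pW Wsub sN K_def in blast)
    then have "H_ising N M d lam c \<le> H_potts M d lam s"
      using HI HP sumeq cardle lam unfolding p_def
      by (smt (verit) mult_left_mono of_nat_mono)
    then show ?thesis using cI by blast
  qed
qed




lemma dirB:
  fixes N M :: nat and d :: "nat \<Rightarrow> nat \<Rightarrow> nat \<Rightarrow> real" and lam :: real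
  assumes N1: "N \<ge> 1" and M1: "M \<ge> 1" and lam: "lam \<ge> 0"
    and add: "\<And>i j l k. i \<in> {1..N} \<Longrightarrow> j < M \<Longrightarrow> l < M \<Longrightarrow> k < M \<Longrightarrow>
                     d i j l + d i l k = d i j k"
    and cI: "c \<in> ising_configs M"
  shows "\<exists>s\<in>potts_configs N M. H_potts M d lam s \<le> H_ising N M d lam c"
proof -
  define W where "W = {j. j < M \<and> c ! j}"
  have Wsub: "W \<subseteq> {..<M}" by (auto simp: W_def)
  have finW: "finite W" using Wsub finite_subset by blast
  have HI: "H_ising N M d lam c =
     - (\<Sum>k<card W. J_coup N d (sorted_list_of_set W ! k) (sorted_list_of_set W ! ((k + 1) mod card W)))
      + lam * real (card W)"
    unfolding H_ising_def walls_def W_def[symmetric] Let_def using finW by simp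
  show ?thesis
  proof (cases "W = {}")
    case True
    define s where "s = replicate M (1::nat)"
    have sP: "s \<in> potts_configs N M" using N1 by (auto simp: s_def potts_configs_def)
    have "(\<Sum>j<M. d (s ! j) j ((j + 1) mod M)) = (\<Sum>j<M. d 1 j ((j + 1) mod M))"
      by (rule sum.cong) (auto simp: s_def)
    also have "\<dots> = 0"
      by (rule const_sum[where N=N and M=M]) (fact M1, rule add, assumption+, use N1 in simp)
    finally have S: "(\<Sum>j<M. d (s ! j) j ((j + 1) mod M)) = 0" .
    have eqs: "s ! j = s ! ((j + 1) mod M)" if "j < M" for j
    proof -
      have "(j + 1) mod M < M" using that by simp
      then show ?thesis using that by (simp only: s_def nth_replicate)
    qed
    have "{j. j < M \<and> s ! j \<noteq> s ! ((j + 1) mod M)} = {}" using eqs by blast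
    then have c0: "card {j. j < M \<and> s ! j \<noteq> s ! ((j + 1) mod M)} = 0" by (simp only: card.empty)
    have "H_potts M d lam s = 0" unfolding H_potts_def S c0 by simp
    moreover have "H_ising N M d lam c = 0" using HI True by simp
    ultimately have "H_potts M d lam s \<le> H_ising N M d lam c" by simp
    then show ?thesis using sP by blast
  next
    case False
    define p where "p = sorted_list_of_set W"
    define K where "K = card W"
    have K1: "K \<ge> 1" using finW False unfolding K_def by (simp add: Suc_le_eq card_gt_0_iff)
    have "\<forall>k. \<exists>a. a \<in> {1..N} \<and> d a (p ! k) (p ! ((k+1) mod K)) = J_coup N d (p ! k) (p ! ((k+1) mod K))"
      using J_attained[OF N1] by blast
    then obtain i where iP: "\<And>k. i k \<in> {1..N}"
      and iJ: "\<And>k. d (i k) (p ! k) (p ! ((k+1) mod K)) = J_coup N d (p ! k) (p ! ((k+1) mod K))"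
      by metis
    define s where "s = map (\<lambda>j. i (segf W j)) [0..<M]"
    have sj: "s ! j = i (segf W j)" if "j < M" for j using that by (simp add: s_def)
    have sP: "s \<in> potts_configs N M" using iP by (auto simp: s_def potts_configs_def)
    have sN: "s ! j \<in> {1..N}" if "j < M" for j using that sj iP by simp
    have sumeq: "(\<Sum>j<M. d (s ! j) j ((j + 1) mod M)) =
        (\<Sum>k<card W. d (i k) (p ! k) (p ! ((k+1) mod card W)))"
      unfolding p_def
    proof (rule potts_sum[where N=N and M=M and W=W and s="\<lambda>j. s ! j" and i=i])
      show "M \<ge> 1" by (rule M1)
      show "\<And>i j l k. i \<in> {1..N} \<Longrightarrow> j < M \<Longrightarrow> l < M \<Longrightarrow> k < M \<Longrightarrow>
                     d i j l + d i l k = d i j k" by (rule add)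
      show "W \<subseteq> {..<M}" by (rule Wsub)
      show "W \<noteq> {}" by (rule False)
      show "\<And>j. j < M \<Longrightarrow> s ! j \<in> {1..N}" by (rule sN)
      show "\<And>k. k < card W \<Longrightarrow> i k \<in> {1..N}" by (rule iP)
      show "s ! ((j + M - 1) mod M) = s ! j" if "j < M" "j \<notin> W" for j
      proof -
        have "(j + M - 1) mod M < M" using M1 by simp
        then show ?thesis using sj that segf_S1[OF Wsub False that] by simp
      qed
      show "s ! (sorted_list_of_set W ! k) = i k" if k: "k < card W" for k
      proof -
        have "sorted_list_of_set W ! k \<in> W" using k finW
          by (metis length_sorted_list_of_set nth_mem set_sorted_list_of_set)
        then have "sorted_list_of_set W ! k < M" using Wsub by auto
        then show ?thesis using sj segf_S2[OF finW k] by simp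
      qed
      show "s ! ((sorted_list_of_set W ! k + M - 1) mod M) = i ((k + card W - 1) mod card W)"
        if k: "k < card W" for k
      proof -
        have "(sorted_list_of_set W ! k + M - 1) mod M < M" using M1 by simp
        then show ?thesis using sj segf_S3[OF Wsub False k] by simp
      qed
    qed
    define PW where "PW = {j. j < M \<and> s ! j \<noteq> s ! ((j + 1) mod M)}"
    have cardle: "card PW \<le> card W"
    proof (rule card_inj_on_le[of "\<lambda>j. (j + 1) mod M"])
      show "inj_on (\<lambda>j. (j + 1) mod M) PW"
      proof (rule inj_onI)
        fix a b assume "a \<in> PW" "b \<in> PW" "(a + 1) mod M = (b + 1) mod M"
        then show "a = b" using pred_succ[of a M] pred_succ[of b M] by (auto simp: PW_def)
      qed
      show "(\<lambda>j. (j + 1) mod M) ` PW \<subseteq> W"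
      proof
        fix x assume "x \<in> (\<lambda>j. (j + 1) mod M) ` PW"
        then obtain j where j: "j \<in> PW" "x = (j + 1) mod M" by auto
        have jM: "j < M" using j by (simp add: PW_def)
        have xM: "x < M" using j M1 by simp
        show "x \<in> W"
        proof (rule ccontr)
          assume xn: "x \<notin> W"
          have pj: "(x + M - 1) mod M = j" using pred_succ[OF jM] j by simp
          have "segf W j = segf W x" using segf_S1[OF Wsub False xM xn] pj by simp
          then have "s ! j = s ! x" using sj jM xM by simp
          then show False using j by (simp add: PW_def)
        qed
      qed
      show "finite W" by (rule finW)
    qed
    have HP: "H_potts M d lam s = - (\<Sum>j<M. d (s ! j) j ((j + 1) mod M)) + lam * real (card PW)"
      unfolding H_potts_def PW_def by simp
    have "(\<Sum>k<card W. d (i k) (p ! k) (p ! ((k+1) mod card W))) =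
          (\<Sum>k<card W. J_coup N d (p ! k) (p ! ((k+1) mod card W)))"
      using iJ unfolding K_def by simp
    then have "H_potts M d lam s \<le> H_ising N M d lam c"
      using HI HP sumeq cardle lam unfolding p_def
      by (smt (verit) mult_left_mono of_nat_mono)
    then show ?thesis using sP by blast
  qed
qed

theorem theorem1:
  fixes N M :: nat and d :: "nat \<Rightarrow> nat \<Rightarrow> nat \<Rightarrow> real" and lam :: real
  assumes "N \<ge> 1" and "M \<ge> 1" and "lam \<ge> 0"
    and additive: "\<And>i j l k. i \<in> {1..N} \<Longrightarrow> j < M \<Longrightarrow> l < M \<Longrightarrow> k < M \<Longrightarrow>
                     d i j l + d i l k = d i j k"
  shows "Min (H_potts M d lam ` potts_configs N M) = Min (H_ising N M d lam ` ising_configs M)"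
proof -
  have finP: "finite (potts_configs N M)"
  proof -
    have "potts_configs N M = {xs. set xs \<subseteq> {1..N} \<and> length xs = M}"
      by (auto simp: potts_configs_def)
    then show ?thesis using finite_lists_length_eq[of "{1..N}" M] by simp
  qed
  have finI: "finite (ising_configs M)"
  proof -
    have "ising_configs M = {xs. set xs \<subseteq> (UNIV :: bool set) \<and> length xs = M}"
      by (auto simp: ising_configs_def)
    then show ?thesis using finite_lists_length_eq[of "UNIV :: bool set" M] by simp
  qed
  have neP: "potts_configs N M \<noteq> {}"
  proof -
    have "replicate M 1 \<in> potts_configs N M" using assms(1) by (auto simp: potts_configs_def)
    then show ?thesis by blast
  qed
  have neI: "ising_configs M \<noteq> {}"
  proof -
    have "replicate M False \<in> ising_configs M" by (auto simp: ising_configs_def)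
    then show ?thesis by blast
  qed
  have le1: "Min (H_ising N M d lam ` ising_configs M) \<le> Min (H_potts M d lam ` potts_configs N M)"
  proof -
    have "Min (H_potts M d lam ` potts_configs N M) \<in> H_potts M d lam ` potts_configs N M"
      using finP neP by (intro Min_in) auto
    then obtain s where s: "s \<in> potts_configs N M"
      "Min (H_potts M d lam ` potts_configs N M) = H_potts M d lam s" by auto
    obtain c where c: "c \<in> ising_configs M" "H_ising N M d lam c \<le> H_potts M d lam s"
      proof -
      have "\<exists>c\<in>ising_configs M. H_ising N M d lam c \<le> H_potts M d lam s"
        by (rule dirA[where d=d and N=N and M=M and lam=lam and s=s])
           (fact assms(1), fact assms(2), fact assms(3), rule additive, assumption+, fact s(1))
      then show ?thesis using that by blast
    qed
    have "Min (H_ising N M d lam ` ising_configs M) \<le> H_ising N M d lam c"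
      using finI c(1) by (intro Min_le) auto
    then show ?thesis using c s by simp
  qed
  have le2: "Min (H_potts M d lam ` potts_configs N M) \<le> Min (H_ising N M d lam ` ising_configs M)"
  proof -
    have "Min (H_ising N M d lam ` ising_configs M) \<in> H_ising N M d lam ` ising_configs M"
      using finI neI by (intro Min_in) auto
    then obtain c where c: "c \<in> ising_configs M"
      "Min (H_ising N M d lam ` ising_configs M) = H_ising N M d lam c" by auto
    obtain s where s: "s \<in> potts_configs N M" "H_potts M d lam s \<le> H_ising N M d lam c"
      proof -
      have "\<exists>s\<in>potts_configs N M. H_potts M d lam s \<le> H_ising N M d lam c"
        by (rule dirB[where d=d and N=N and M=M and lam=lam and c=c])
           (fact assms(1), fact assms(2), fact assms(3), rule additive, assumption+, fact c(1))
      then show ?thesis using that by blast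
    qed
    have "Min (H_potts M d lam ` potts_configs N M) \<le> H_potts M d lam s"
      using finP s(1) by (intro Min_le) auto
    then show ?thesis using c s by simp
  qed
  show ?thesis using le1 le2 by simp
qed


end
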